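(* Let $\mathcal{LS}_{\mathfrak{A}_2}$ be the operad (variety) of left-symmetric algebras over a field of characteristic $0$ satisfying the identity $a(bc)+b(ac)+a(cb)+c(ab)+b(ca)+c(ba)=0$. Its Koszul dual operad $\mathcal{LS}_{\mathfrak{A}_2}^{(!)}$ is the operad of alternative algebras satisfying the identity $(ab)c=(ba)c$.
   Context: A left-symmetric algebra is an algebra whose associator $(a,b,c)=(ab)c-a(bc)$ satisfies $(a,b,c)=(b,a,c)$. An algebra is alternative if $(a,a,b)=0=(a,b,b)$. The Koszul dual of a binary quadratic operad is taken in the sense of Ginzburg–Kapranov; equivalently, $\mathcal{P}^{(!)}$ is the quadratic operad whose algebras $U$ are defined by exactly those degree-3 identities making $S\otimes U$, with product $(a\otimes u)(b\otimes v)=ab\otimes uv$, Lie-admissible for every $\mathcal{P}$-algebra $S$. *)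

theory Defs
  imports Main HOL.Vector_Spaces "HOL-Library.Function_Algebras"
begin

definition is_algebra :: "('k::field \<Rightarrow> 'a::ab_group_add \<Rightarrow> 'a) \<Rightarrow> ('a \<Rightarrow> 'a \<Rightarrow> 'a) \<Rightarrow> bool" where
  "is_algebra sc m \<longleftrightarrow> vector_space sc \<and>
     (\<forall>x y z. m (x + y) z = m x z + m y z) \<and>
     (\<forall>x y z. m x (y + z) = m x y + m x z) \<and>
     (\<forall>c x y. m (sc c x) y = sc c (m x y)) \<and>
     (\<forall>c x y. m x (sc c y) = sc c (m x y))"

definition assoc :: "('a::ab_group_add \<Rightarrow> 'a \<Rightarrow> 'a) \<Rightarrow> 'a \<Rightarrow> 'a \<Rightarrow> 'a \<Rightarrow> 'a" where
  "assoc m a b c = m (m a b) c - m a (m b c)"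

definition left_symmetric :: "('a::ab_group_add \<Rightarrow> 'a \<Rightarrow> 'a) \<Rightarrow> bool" where
  "left_symmetric m \<longleftrightarrow> (\<forall>a b c. assoc m a b c = assoc m b a c)"

definition A2_identity :: "('a::ab_group_add \<Rightarrow> 'a \<Rightarrow> 'a) \<Rightarrow> bool" where
  "A2_identity m \<longleftrightarrow> (\<forall>a b c.
     m a (m b c) + m b (m a c) + m a (m c b) + m c (m a b) + m b (m c a) + m c (m b a) = 0)"

definition LS_A2 :: "('a::ab_group_add \<Rightarrow> 'a \<Rightarrow> 'a) \<Rightarrow> bool" where
  "LS_A2 m \<longleftrightarrow> left_symmetric m \<and> A2_identity m"

definition alternative :: "('a::ab_group_add \<Rightarrow> 'a \<Rightarrow> 'a) \<Rightarrow> bool" where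
  "alternative m \<longleftrightarrow> (\<forall>a b. assoc m a a b = 0 \<and> assoc m a b b = 0)"

definition left_comm_id :: "('a::ab_group_add \<Rightarrow> 'a \<Rightarrow> 'a) \<Rightarrow> bool" where
  "left_comm_id m \<longleftrightarrow> (\<forall>a b c. m (m a b) c = m (m b a) c)"

text \<open>Elements of S \<otimes> U are represented by formal finite sums of pure tensors
  (lists of pairs (s,u) standing for the sum of s \<otimes> u). Over a field, an element of
  S \<otimes> U is zero iff every 'k-valued bilinear form on S \<times> U annihilates it.\<close>

definition bilinear_form :: "('k::field \<Rightarrow> 's::ab_group_add \<Rightarrow> 's) \<Rightarrow> ('k \<Rightarrow> 'u::ab_group_add \<Rightarrow> 'u)
    \<Rightarrow> ('s \<Rightarrow> 'u \<Rightarrow> 'k) \<Rightarrow> bool" where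
  "bilinear_form scS scU \<beta> \<longleftrightarrow>
     (\<forall>s1 s2 u. \<beta> (s1 + s2) u = \<beta> s1 u + \<beta> s2 u) \<and>
     (\<forall>s u1 u2. \<beta> s (u1 + u2) = \<beta> s u1 + \<beta> s u2) \<and>
     (\<forall>c s u. \<beta> (scS c s) u = c * \<beta> s u) \<and>
     (\<forall>c s u. \<beta> s (scU c u) = c * \<beta> s u)"

definition tensor_zero :: "('k::field \<Rightarrow> 's::ab_group_add \<Rightarrow> 's) \<Rightarrow> ('k \<Rightarrow> 'u::ab_group_add \<Rightarrow> 'u)
    \<Rightarrow> ('s \<times> 'u) list \<Rightarrow> bool" where
  "tensor_zero scS scU xs \<longleftrightarrow>
     (\<forall>\<beta>. bilinear_form scS scU \<beta> \<longrightarrow> (\<Sum>(s, u)\<leftarrow>xs. \<beta> s u) = 0)"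

definition tprod :: "('s \<Rightarrow> 's \<Rightarrow> 's) \<Rightarrow> ('u \<Rightarrow> 'u \<Rightarrow> 'u)
    \<Rightarrow> ('s \<times> 'u) list \<Rightarrow> ('s \<times> 'u) list \<Rightarrow> ('s \<times> 'u) list" where
  "tprod mS mU xs ys = [(mS s t, mU u v). (s, u) \<leftarrow> xs, (t, v) \<leftarrow> ys]"

definition tneg :: "('s::ab_group_add \<times> 'u) list \<Rightarrow> ('s \<times> 'u) list" where
  "tneg xs = map (\<lambda>(s, u). (- s, u)) xs"

definition tcomm :: "('s::ab_group_add \<Rightarrow> 's \<Rightarrow> 's) \<Rightarrow> ('u \<Rightarrow> 'u \<Rightarrow> 'u)
    \<Rightarrow> ('s \<times> 'u) list \<Rightarrow> ('s \<times> 'u) list \<Rightarrow> ('s \<times> 'u) list" where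
  "tcomm mS mU xs ys = tprod mS mU xs ys @ tneg (tprod mS mU ys xs)"

definition tensor_Lie_admissible ::
  "('k::field \<Rightarrow> 's::ab_group_add \<Rightarrow> 's) \<Rightarrow> ('s \<Rightarrow> 's \<Rightarrow> 's)
   \<Rightarrow> ('k \<Rightarrow> 'u::ab_group_add \<Rightarrow> 'u) \<Rightarrow> ('u \<Rightarrow> 'u \<Rightarrow> 'u) \<Rightarrow> bool" where
  "tensor_Lie_admissible scS mS scU mU \<longleftrightarrow>
     (\<forall>xs ys zs. tensor_zero scS scU
        (tcomm mS mU (tcomm mS mU xs ys) zs @
         tcomm mS mU (tcomm mS mU ys zs) xs @
         tcomm mS mU (tcomm mS mU zs xs) ys))"

text \<open>U belongs to the Koszul dual variety of a class P (over carrier type 's)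
  iff S \<otimes> U is Lie-admissible for every P-algebra S.\<close>

end

theory Submission
  imports Defs
begin

lemma vs_field: "vector_space ((*) :: 'k::field \<Rightarrow> 'k \<Rightarrow> 'k)"
  by unfold_locales (auto simp: algebra_simps)

lemma separate:
  fixes sc :: "'k::field \<Rightarrow> 'u::ab_group_add \<Rightarrow> 'u"
  assumes vs: "vector_space sc" and x: "x \<noteq> 0"
  shows "\<exists>\<phi>. (\<forall>a b. \<phi> (a + b) = \<phi> a + \<phi> b) \<and> (\<forall>c a. \<phi> (sc c a) = c * \<phi> a) \<and> \<phi> x = 1"
proof -
  interpret vp: vector_space_pair sc "(*) :: 'k \<Rightarrow> 'k \<Rightarrow> 'k"
    using vs vs_field by (simp add: vector_space_pair_def)
  have "vp.vs1.independent {x}"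
    using x by (intro vp.vs1.independent_insertI) (auto simp: vp.vs1.independent_empty)
  from vp.linear_independent_extend[OF this, of "\<lambda>_. 1"]
  obtain g where "Vector_Spaces.linear sc (*) g" "g x = 1" by auto
  then show ?thesis by (auto simp: Vector_Spaces.linear_iff)
qed

lemma add_facts:
  fixes \<phi> :: "'u::ab_group_add \<Rightarrow> 'k::field"
  assumes "\<forall>a b. \<phi> (a + b) = \<phi> a + (\<phi> b :: 'k::field)"
  shows "\<phi> (a - b) = \<phi> a - \<phi> b" "\<phi> (- a) = - \<phi> a" "\<phi> 0 = 0"
proof -
  have h: "\<phi> 0 = \<phi> 0 + \<phi> 0" using assms[rule_format, of 0 0] by (simp only: add.left_neutral)
  have "\<phi> 0 + \<phi> 0 = \<phi> 0 + 0" by (simp only: add.right_neutral h[symmetric])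
  then have z: "\<phi> 0 = 0" by (rule add_left_imp_eq)
  have n: "\<phi> (- a) = - \<phi> a" for a
  proof -
    have "\<phi> a + \<phi> (- a) = 0" using assms[rule_format, of a "-a"] z by simp
    then show ?thesis by (simp add: add_eq_0_iff)
  qed
  show "\<phi> (a - b) = \<phi> a - \<phi> b" using assms[rule_format, of a "-b"] n by simp
  show "\<phi> (- a) = - \<phi> a" by (rule n)
  show "\<phi> 0 = 0" by (rule z)
qed

lemma twice_zero:
  fixes sc :: "'k::field_char_0 \<Rightarrow> 'u::ab_group_add \<Rightarrow> 'u" and x :: 'u
  assumes "vector_space sc" "x + x = 0" shows "x = 0"
proof -
  interpret vector_space sc by fact
  have "x = sc (1/2 + 1/2) x" by simp
  also have "\<dots> = sc (1/2) (x + x)" by (simp only: scale_left_distrib scale_right_distrib)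
  also have "\<dots> = 0" using assms(2) by simp
  finally show ?thesis .
qed

lemma from_functionals:
  fixes sc :: "'k::field \<Rightarrow> 'u::ab_group_add \<Rightarrow> 'u"
  assumes "vector_space sc"
    and "\<And>\<phi>. (\<forall>a b. \<phi> (a + b) = \<phi> a + \<phi> b) \<Longrightarrow> (\<forall>c a. \<phi> (sc c a) = c * \<phi> a) \<Longrightarrow> \<phi> X = 0"
  shows "X = 0"
  using separate[OF assms(1), of X] assms(2) by force

definition scF :: "'k::field \<Rightarrow> (nat \<Rightarrow> 'k) \<Rightarrow> (nat \<Rightarrow> 'k)" where
  "scF c f = (\<lambda>n. c * f n)"

lemma vs_scF: "vector_space (scF :: 'k::field \<Rightarrow> _)"
  by unfold_locales (auto simp: scF_def fun_eq_iff algebra_simps)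

definition M1 :: "(nat \<Rightarrow> 'k::field) \<Rightarrow> (nat \<Rightarrow> 'k) \<Rightarrow> (nat \<Rightarrow> 'k)" where
  "M1 x y = (\<lambda>n. if n = 3 then x 0 * y 1 + x 1 * y 0 else if n = 6 then x 3 * y 2 else 0)"
definition M2 :: "(nat \<Rightarrow> 'k::field) \<Rightarrow> (nat \<Rightarrow> 'k) \<Rightarrow> (nat \<Rightarrow> 'k)" where
  "M2 x y = (\<lambda>n. if n = 5 then x 0 * y 1 - x 1 * y 0 else if n = 3 then x 1 * y 2
     else if n = 4 then x 0 * y 2 else if n = 6 then x 0 * y 3 - x 1 * y 4 + x 5 * y 2 else 0)"
definition M3 :: "(nat \<Rightarrow> 'k::field) \<Rightarrow> (nat \<Rightarrow> 'k) \<Rightarrow> (nat \<Rightarrow> 'k)" where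
  "M3 x y = (\<lambda>n. if n = 5 then x 0 * y 1 else if n = 4 then x 0 * y 2
     else if n = 3 then x 1 * y 2 - x 2 * y 1 else if n = 6 then x 5 * y 2 - x 4 * y 1 + x 0 * y 3 else 0)"

lemma alg_M1: "is_algebra scF M1" "LS_A2 M1"
  unfolding is_algebra_def LS_A2_def left_symmetric_def A2_identity_def assoc_def
  by (auto simp: vs_scF M1_def scF_def fun_eq_iff algebra_simps)
lemma alg_M2: "is_algebra scF M2" "LS_A2 M2"
  unfolding is_algebra_def LS_A2_def left_symmetric_def A2_identity_def assoc_def
  by (auto simp: vs_scF M2_def scF_def fun_eq_iff algebra_simps)
lemma alg_M3: "is_algebra scF M3" "LS_A2 M3"
  unfolding is_algebra_def LS_A2_def left_symmetric_def A2_identity_def assoc_def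
  by (auto simp: vs_scF M3_def scF_def fun_eq_iff algebra_simps)

definition e :: "nat \<Rightarrow> nat \<Rightarrow> 'k::field" where "e i = (\<lambda>n. if n = i then 1 else 0)"

lemma bil: "(\<forall>a b. \<phi> (a + b) = \<phi> a + \<phi> b) \<Longrightarrow> (\<forall>c a. \<phi> (scU c a) = c * \<phi> a) \<Longrightarrow>
  bilinear_form scF scU (\<lambda>s u. s 6 * \<phi> u)"
  unfolding bilinear_form_def by (auto simp: scF_def algebra_simps)

lemma ident1:
  assumes "tensor_Lie_admissible scF M1 scU mU" "vector_space scU"
  shows "mU (mU u v) w = mU (mU v u) w"
proof -
  have "mU (mU u v) w - mU (mU v u) w = 0"
  proof (rule from_functionals[OF assms(2)])
    fix \<phi> assume p: "\<forall>a b. \<phi> (a + b) = \<phi> a + \<phi> b" "\<forall>c a. \<phi> (scU c a) = c * \<phi> a"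
  have "tensor_zero scF scU (tcomm M1 mU (tcomm M1 mU [(e 0, u)] [(e 1, v)]) [(e 2, w)] @
         tcomm M1 mU (tcomm M1 mU [(e 1, v)] [(e 2, w)]) [(e 0, u)] @
         tcomm M1 mU (tcomm M1 mU [(e 2, w)] [(e 0, u)]) [(e 1, v)])"
    using assms(1) unfolding tensor_Lie_admissible_def by blast
  then have "(\<Sum>(s, u)\<leftarrow>(tcomm M1 mU (tcomm M1 mU [(e 0, u)] [(e 1, v)]) [(e 2, w)] @
         tcomm M1 mU (tcomm M1 mU [(e 1, v)] [(e 2, w)]) [(e 0, u)] @
         tcomm M1 mU (tcomm M1 mU [(e 2, w)] [(e 0, u)]) [(e 1, v)]). s 6 * \<phi> u) = 0"
    using bil[OF p] unfolding tensor_zero_def by blast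
  then have S: "\<phi> (mU (mU u v) w) = \<phi> (mU (mU v u) w)"
    by (simp add: tcomm_def tprod_def tneg_def M1_def e_def)
  show "\<phi> (mU (mU u v) w - mU (mU v u) w) = 0"
    unfolding assoc_def add_facts[OF p(1)] p(1)[rule_format] using S by (simp add: algebra_simps)
  qed
  then show ?thesis by simp
qed
lemma ident2:
  assumes "tensor_Lie_admissible scF M2 scU mU" "vector_space scU"
  shows "assoc mU u v w + assoc mU v u w = 0"
proof -
  have "assoc mU u v w + assoc mU v u w = 0"
  proof (rule from_functionals[OF assms(2)])
    fix \<phi> assume p: "\<forall>a b. \<phi> (a + b) = \<phi> a + \<phi> b" "\<forall>c a. \<phi> (scU c a) = c * \<phi> a"
  have "tensor_zero scF scU (tcomm M2 mU (tcomm M2 mU [(e 0, u)] [(e 1, v)]) [(e 2, w)] @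
         tcomm M2 mU (tcomm M2 mU [(e 1, v)] [(e 2, w)]) [(e 0, u)] @
         tcomm M2 mU (tcomm M2 mU [(e 2, w)] [(e 0, u)]) [(e 1, v)])"
    using assms(1) unfolding tensor_Lie_admissible_def by blast
  then have "(\<Sum>(s, u)\<leftarrow>(tcomm M2 mU (tcomm M2 mU [(e 0, u)] [(e 1, v)]) [(e 2, w)] @
         tcomm M2 mU (tcomm M2 mU [(e 1, v)] [(e 2, w)]) [(e 0, u)] @
         tcomm M2 mU (tcomm M2 mU [(e 2, w)] [(e 0, u)]) [(e 1, v)]). s 6 * \<phi> u) = 0"
    using bil[OF p] unfolding tensor_zero_def by blast
  then have S: "\<phi> (mU (mU u v) w) + (\<phi> (mU (mU v u) w) + (- \<phi> (mU u (mU v w)) - \<phi> (mU v (mU u w)))) = 0"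
    by (simp add: tcomm_def tprod_def tneg_def M2_def e_def)
  show "\<phi> (assoc mU u v w + assoc mU v u w) = 0"
    unfolding assoc_def add_facts[OF p(1)] p(1)[rule_format] using S by (simp add: algebra_simps)
  qed
  then show ?thesis by simp
qed
lemma ident3:
  assumes "tensor_Lie_admissible scF M3 scU mU" "vector_space scU"
  shows "assoc mU u v w + assoc mU u w v = 0"
proof -
  have "assoc mU u v w + assoc mU u w v = 0"
  proof (rule from_functionals[OF assms(2)])
    fix \<phi> assume p: "\<forall>a b. \<phi> (a + b) = \<phi> a + \<phi> b" "\<forall>c a. \<phi> (scU c a) = c * \<phi> a"
  have "tensor_zero scF scU (tcomm M3 mU (tcomm M3 mU [(e 0, u)] [(e 1, v)]) [(e 2, w)] @
         tcomm M3 mU (tcomm M3 mU [(e 1, v)] [(e 2, w)]) [(e 0, u)] @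
         tcomm M3 mU (tcomm M3 mU [(e 2, w)] [(e 0, u)]) [(e 1, v)])"
    using assms(1) unfolding tensor_Lie_admissible_def by blast
  then have "(\<Sum>(s, u)\<leftarrow>(tcomm M3 mU (tcomm M3 mU [(e 0, u)] [(e 1, v)]) [(e 2, w)] @
         tcomm M3 mU (tcomm M3 mU [(e 1, v)] [(e 2, w)]) [(e 0, u)] @
         tcomm M3 mU (tcomm M3 mU [(e 2, w)] [(e 0, u)]) [(e 1, v)]). s 6 * \<phi> u) = 0"
    using bil[OF p] unfolding tensor_zero_def by blast
  then have S: "\<phi> (mU (mU u v) w) + (\<phi> (mU (mU u w) v) - \<phi> (mU u (mU w v)) - \<phi> (mU u (mU v w))) = 0"
    by (simp add: tcomm_def tprod_def tneg_def M3_def e_def)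
  show "\<phi> (assoc mU u v w + assoc mU u w v) = 0"
    unfolding assoc_def add_facts[OF p(1)] p(1)[rule_format] using S by (simp add: algebra_simps)
  qed
  then show ?thesis by simp
qed

lemma alt_antisym:
  fixes mU :: "'u::ab_group_add \<Rightarrow> 'u \<Rightarrow> 'u"
  assumes ladd: "\<And>x y z. mU (x + y) z = mU x z + mU y z"
    and radd: "\<And>x y z. mU x (y + z) = mU x y + mU x z"
    and alt: "alternative mU"
  shows "assoc mU x y z = - assoc mU y x z" "assoc mU x y z = - assoc mU x z y"
proof -
  have a: "assoc mU a a b = 0" "assoc mU a b b = 0" for a b using alt unfolding alternative_def by auto
  have "assoc mU (x + y) (x + y) z = assoc mU x x z + assoc mU y y z + assoc mU x y z + assoc mU y x z"
    unfolding assoc_def by (simp add: ladd radd algebra_simps)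
  then show "assoc mU x y z = - assoc mU y x z" using a by (simp add: eq_neg_iff_add_eq_0)
  have "assoc mU x (y + z) (y + z) = assoc mU x y y + assoc mU x z z + assoc mU x y z + assoc mU x z y"
    unfolding assoc_def by (simp add: ladd radd algebra_simps)
  then show "assoc mU x y z = - assoc mU x z y" using a by (simp add: eq_neg_iff_add_eq_0)
qed

lemma point:
  fixes mS :: "'s::ab_group_add \<Rightarrow> 's \<Rightarrow> 's" and mU :: "'u::ab_group_add \<Rightarrow> 'u \<Rightarrow> 'u"
    and \<beta> :: "'s \<Rightarrow> 'u \<Rightarrow> 'k::field"
  assumes ladd: "\<And>x y z. mU (x + y) z = mU x z + mU y z"
    and radd: "\<And>x y z. mU x (y + z) = mU x y + mU x z"
    and alt: "alternative mU" and lc: "left_comm_id mU"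
    and ls: "LS_A2 mS"
    and b1: "\<And>s1 s2 u. \<beta> (s1 + s2) u = \<beta> s1 u + \<beta> s2 u"
    and b2: "\<And>s u1 u2. \<beta> s (u1 + u2) = \<beta> s u1 + \<beta> s u2"
  shows "\<beta> (mS (mS a b) c) (mU (mU u v) w) - \<beta> (mS (mS b a) c) (mU (mU v u) w)
    + \<beta> (mS c (mS b a)) (mU w (mU v u)) - \<beta> (mS c (mS a b)) (mU w (mU u v))
    + \<beta> (mS (mS b c) a) (mU (mU v w) u) - \<beta> (mS (mS c b) a) (mU (mU w v) u)
    + \<beta> (mS a (mS c b)) (mU u (mU w v)) - \<beta> (mS a (mS b c)) (mU u (mU v w))
    + \<beta> (mS (mS c a) b) (mU (mU w u) v) - \<beta> (mS (mS a c) b) (mU (mU u w) v)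
    + \<beta> (mS b (mS a c)) (mU v (mU u w)) - \<beta> (mS b (mS c a)) (mU v (mU w u)) = 0"
proof -
  note A = alt_antisym[OF ladd radd alt]
  have bn1: "\<beta> (- s) u = - \<beta> s u" "\<beta> (s - t) u = \<beta> s u - \<beta> t u" for s t u
  proof -
    have f: "\<forall>s t. \<beta> (s + t) u = \<beta> s u + \<beta> t u" using b1 by blast
    show "\<beta> (- s) u = - \<beta> s u" "\<beta> (s - t) u = \<beta> s u - \<beta> t u"
      using add_facts[OF f] by auto
  qed
  have bn2: "\<beta> s (- u) = - \<beta> s u" "\<beta> s (u - t) = \<beta> s u - \<beta> s t" for s t u
  proof -
    have f: "\<forall>u t. \<beta> s (u + t) = \<beta> s u + \<beta> s t" using b2 by blast
    show "\<beta> s (- u) = - \<beta> s u" "\<beta> s (u - t) = \<beta> s u - \<beta> s t"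
      using add_facts[OF f] by auto
  qed
  have lcx: "mU (mU x y) z = mU (mU y x) z" for x y z using lc unfolding left_comm_id_def by blast
  have U1: "mU (mU v u) w = mU (mU u v) w" "mU (mU w u) v = mU (mU u w) v" "mU (mU w v) u = mU (mU v w) u"
    using lcx by blast+
  have U2: "mU w (mU v u) = mU (mU v w) u + mU (mU u v) w - mU u (mU v w)"
    using A(1)[of w v u] A(2)[of v w u] A(1)[of v u w] lcx[of w v u] unfolding assoc_def by (simp add: algebra_simps)
  have U3: "mU w (mU u v) = mU (mU u w) v - mU (mU u v) w + mU u (mU v w)"
    using A(1)[of w u v] A(2)[of u w v] lcx[of w u v] unfolding assoc_def by (simp add: algebra_simps)
  have U4: "mU u (mU w v) = mU (mU u w) v + mU (mU u v) w - mU u (mU v w)"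
    using A(2)[of u w v] unfolding assoc_def by (simp add: algebra_simps)
  have U5: "mU v (mU u w) = mU (mU u v) w + mU (mU u v) w - mU u (mU v w)"
    using A(1)[of v u w] lcx[of v u w] unfolding assoc_def by (simp add: algebra_simps)
  have U6: "mU v (mU w u) = mU (mU v w) u - mU (mU u v) w + mU u (mU v w)"
  proof -
    have "mU v (mU w u) = mU (mU v w) u + (mU (mU v u) w - mU v (mU u w))"
      using A(2)[of v w u] unfolding assoc_def by (simp add: algebra_simps)
    then show ?thesis using U5 lcx[of v u w] by (simp add: algebra_simps)
  qed
  have lsx: "assoc mS x y z = assoc mS y x z" for x y z using ls unfolding LS_A2_def left_symmetric_def by blast
  have a2: "mS a (mS b c) + mS b (mS a c) + mS a (mS c b) + mS c (mS a b) + mS b (mS c a) + mS c (mS b a) = 0"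
    using ls unfolding LS_A2_def A2_identity_def by blast
  have S1: "mS (mS b a) c = mS (mS a b) c - mS a (mS b c) + mS b (mS a c)"
    using lsx[of a b c] unfolding assoc_def by (simp add: algebra_simps)
  have S2: "mS (mS c a) b = mS (mS a c) b - mS a (mS c b) + mS c (mS a b)"
    using lsx[of a c b] unfolding assoc_def by (simp add: algebra_simps)
  have S3: "mS (mS c b) a = mS (mS b c) a - mS b (mS c a) + mS c (mS b a)"
    using lsx[of b c a] unfolding assoc_def by (simp add: algebra_simps)
  have S4: "mS c (mS b a) = - (mS a (mS b c) + mS b (mS a c) + mS a (mS c b) + mS c (mS a b) + mS b (mS c a))"
    using a2 by (simp only: add_eq_0_iff)
  show ?thesis
    apply (simp only: U1 U2 U3 U4 U5 U6 S1 S2 S3 S4)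
    apply (simp only: b1 b2 bn1 bn2)
    apply (simp add: algebra_simps)
    done
qed

lemma sum_list_negf: "(\<Sum>x\<leftarrow>xs. - f x) = - (\<Sum>x\<leftarrow>xs. f x :: 'a::ab_group_add)"
  by (induct xs) simp_all

lemma swap2: "(\<Sum>x\<leftarrow>A. \<Sum>y\<leftarrow>B. f x y) = (\<Sum>y\<leftarrow>B. \<Sum>x\<leftarrow>A. f x y :: 'a::comm_monoid_add)"
  by (induct A) (simp_all add: sum_list_addf)

lemma sum_concat: "(\<Sum>p\<leftarrow>concat xss. h p) = (\<Sum>xs\<leftarrow>xss. \<Sum>p\<leftarrow>xs. h p :: 'a::comm_monoid_add)"
  by (induct xss) simp_all

lemma sum_tprod: "(\<Sum>p\<leftarrow>tprod mS mU xs ys. h p) =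
   (\<Sum>p\<leftarrow>xs. \<Sum>q\<leftarrow>ys. h (mS (fst p) (fst q), mU (snd p) (snd q)) :: 'a::comm_monoid_add)"
  by (induct xs) (auto simp: tprod_def sum_concat case_prod_beta o_def)

lemma sum_tneg: "(\<Sum>p\<leftarrow>tneg xs. h p) = (\<Sum>p\<leftarrow>xs. h (- fst p, snd p) :: 'a::comm_monoid_add)"
  by (induct xs) (auto simp: tneg_def case_prod_beta)

lemma add_facts2:
  fixes \<phi> :: "'u::ab_group_add \<Rightarrow> 'v::ab_group_add"
  assumes "\<forall>a b. \<phi> (a + b) = \<phi> a + \<phi> b"
  shows "\<phi> (- a) = - \<phi> a"
proof -
  have h: "\<phi> 0 = \<phi> 0 + \<phi> 0" using assms[rule_format, of 0 0] by (simp only: add.left_neutral)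
  have "\<phi> 0 + \<phi> 0 = \<phi> 0 + 0" by (simp only: add.right_neutral h[symmetric])
  then have z: "\<phi> 0 = 0" by (rule add_left_imp_eq)
  have "\<phi> a + \<phi> (- a) = 0" using assms[rule_format, of a "-a"] z by simp
  then show ?thesis by (simp add: add_eq_0_iff)
qed

lemma dir1:
  fixes scU :: "'k::field \<Rightarrow> 'u::ab_group_add \<Rightarrow> 'u" and scS :: "'k \<Rightarrow> 's::ab_group_add \<Rightarrow> 's"
  assumes aU: "is_algebra scU mU" and alt: "alternative mU" and lc: "left_comm_id mU"
    and aS: "is_algebra scS mS" and ls: "LS_A2 mS"
  shows "tensor_Lie_admissible scS mS scU mU"
  unfolding tensor_Lie_admissible_def tensor_zero_def
proof (intro allI impI)
  fix xs ys zs and \<beta> :: "'s \<Rightarrow> 'u \<Rightarrow> 'k"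
  assume bf: "bilinear_form scS scU \<beta>"
  have b1: "\<And>s1 s2 u. \<beta> (s1 + s2) u = \<beta> s1 u + \<beta> s2 u"
    and b2: "\<And>s u1 u2. \<beta> s (u1 + u2) = \<beta> s u1 + \<beta> s u2"
    using bf unfolding bilinear_form_def by auto
  have bneg: "\<And>s u. \<beta> (- s) u = - \<beta> s u"
  proof -
    fix s u
    have "\<forall>a b. \<beta> (a + b) u = \<beta> a u + \<beta> b u" using b1 by blast
    from add_facts2[OF this] show "\<beta> (- s) u = - \<beta> s u" .
  qed
  have ml: "\<And>x y z. mS (x + y) z = mS x z + mS y z" and mr: "\<And>x y z. mS x (y + z) = mS x y + mS x z"
    using aS unfolding is_algebra_def by auto
  have mneg: "\<And>x y. mS (- x) y = - mS x y" "\<And>x y. mS x (- y) = - mS x y"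
  proof -
    fix x y
    have "\<forall>a b. mS (a + b) y = mS a y + mS b y" using ml by blast
    from add_facts2[OF this] show "mS (- x) y = - mS x y" .
    have "\<forall>a b. mS x (a + b) = mS x a + mS x b" using mr by blast
    from add_facts2[OF this] show "mS x (- y) = - mS x y" .
  qed
  have Ul: "\<And>x y z. mU (x + y) z = mU x z + mU y z" and Ur: "\<And>x y z. mU x (y + z) = mU x y + mU x z"
    using aU unfolding is_algebra_def by auto
  note P = point[OF Ul Ur alt lc ls b1 b2]
  have cp: "(\<lambda>(s, u). \<beta> s u) = (\<lambda>p. \<beta> (fst p) (snd p))" by auto
  have Z: "(\<Sum>p\<leftarrow>xs. \<Sum>q\<leftarrow>ys. \<Sum>r\<leftarrow>zs.
    \<beta> (mS (mS (fst p) (fst q)) (fst r)) (mU (mU (snd p) (snd q)) (snd r)) - \<beta> (mS (mS (fst q) (fst p)) (fst r)) (mU (mU (snd q) (snd p)) (snd r))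
    + \<beta> (mS (fst r) (mS (fst q) (fst p))) (mU (snd r) (mU (snd q) (snd p))) - \<beta> (mS (fst r) (mS (fst p) (fst q))) (mU (snd r) (mU (snd p) (snd q)))
    + \<beta> (mS (mS (fst q) (fst r)) (fst p)) (mU (mU (snd q) (snd r)) (snd p)) - \<beta> (mS (mS (fst r) (fst q)) (fst p)) (mU (mU (snd r) (snd q)) (snd p))
    + \<beta> (mS (fst p) (mS (fst r) (fst q))) (mU (snd p) (mU (snd r) (snd q))) - \<beta> (mS (fst p) (mS (fst q) (fst r))) (mU (snd p) (mU (snd q) (snd r)))
    + \<beta> (mS (mS (fst r) (fst p)) (fst q)) (mU (mU (snd r) (snd p)) (snd q)) - \<beta> (mS (mS (fst p) (fst r)) (fst q)) (mU (mU (snd p) (snd r)) (snd q))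
    + \<beta> (mS (fst q) (mS (fst p) (fst r))) (mU (snd q) (mU (snd p) (snd r))) - \<beta> (mS (fst q) (mS (fst r) (fst p))) (mU (snd q) (mU (snd r) (snd p)))) = 0"
    by (simp only: P sum_list_0)
  show "(\<Sum>(s, u)\<leftarrow>(tcomm mS mU (tcomm mS mU xs ys) zs @
         tcomm mS mU (tcomm mS mU ys zs) xs @
         tcomm mS mU (tcomm mS mU zs xs) ys). \<beta> s u) = 0"
    unfolding cp using Z
    by (simp add: tcomm_def sum_tprod sum_tneg mneg bneg sum_list_negf swap2[where A=ys and B=xs]
     swap2[where A=zs and B=xs] swap2[where A=zs and B=ys] sum_list_addf sum_list_subtractf algebra_simps)
qed


theorem mainTheorem5:
  fixes scU :: "'k::field_char_0 \<Rightarrow> 'u::ab_group_add \<Rightarrow> 'u"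
    and mU :: "'u \<Rightarrow> 'u \<Rightarrow> 'u"
  assumes "is_algebra scU mU"
  shows "((alternative mU \<and> left_comm_id mU) \<longrightarrow>
            (\<forall>(scS :: 'k \<Rightarrow> 's::ab_group_add \<Rightarrow> 's) mS.
               is_algebra scS mS \<and> LS_A2 mS \<longrightarrow> tensor_Lie_admissible scS mS scU mU))
       \<and> ((\<forall>(scS :: 'k \<Rightarrow> (nat \<Rightarrow> 'k) \<Rightarrow> (nat \<Rightarrow> 'k)) mS.
               is_algebra scS mS \<and> LS_A2 mS \<longrightarrow> tensor_Lie_admissible scS mS scU mU)
            \<longrightarrow> (alternative mU \<and> left_comm_id mU))"
proof (rule conjI)
  show "(alternative mU \<and> left_comm_id mU) \<longrightarrow>
            (\<forall>(scS :: 'k \<Rightarrow> 's::ab_group_add \<Rightarrow> 's) mS.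
               is_algebra scS mS \<and> LS_A2 mS \<longrightarrow> tensor_Lie_admissible scS mS scU mU)"
    using dir1[OF assms] by blast
next
  show "(\<forall>(scS :: 'k \<Rightarrow> (nat \<Rightarrow> 'k) \<Rightarrow> (nat \<Rightarrow> 'k)) mS.
               is_algebra scS mS \<and> LS_A2 mS \<longrightarrow> tensor_Lie_admissible scS mS scU mU)
            \<longrightarrow> (alternative mU \<and> left_comm_id mU)"
  proof
    assume H: "\<forall>(scS :: 'k \<Rightarrow> (nat \<Rightarrow> 'k) \<Rightarrow> (nat \<Rightarrow> 'k)) mS.
               is_algebra scS mS \<and> LS_A2 mS \<longrightarrow> tensor_Lie_admissible scS mS scU mU"
    have vs: "vector_space scU" using assms unfolding is_algebra_def by blast
    have T1: "tensor_Lie_admissible scF M1 scU mU" using H alg_M1 by blast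
    have T2: "tensor_Lie_admissible scF M2 scU mU" using H alg_M2 by blast
    have T3: "tensor_Lie_admissible scF M3 scU mU" using H alg_M3 by blast
    have lc: "left_comm_id mU" unfolding left_comm_id_def using ident1[OF T1 vs] by blast
    have "assoc mU a a b = 0 \<and> assoc mU a b b = 0" for a b
      using twice_zero[OF vs ident2[OF T2 vs, of a a b]] twice_zero[OF vs ident3[OF T3 vs, of a b b]] by blast
    then have "alternative mU" unfolding alternative_def by blast
    with lc show "alternative mU \<and> left_comm_id mU" by blast
  qed
qed

end
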